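(* Let $A$ be an infinite set, fix $z\in A$, $A'=A\setminus\{z\}$, and $p\in[1,\infty)$. Let $\alpha^n=a_1^na_2^n\ldots\in N(A)$ for $n\in\mathbb{N}^*$, $x_n=p_p(\alpha^n)$, and let $\alpha=a_1a_2\ldots\in N(A)$, $x=p_p(\alpha)$. Suppose the sequence $(a_n)_{n\in\mathbb{N}^*}$ is not eventually constant (i.e. for every $q\in\mathbb{N}^*$ it is not constant from index $q$ on) and $\lim_{n\to\infty}\|x_n-x\|_p=0$. Then $\lim_{n\to\infty}\alpha^n=\alpha$ in $N(A)$.
   Context: $l^p(A)$ is the set of families $x=(x_a)_{a\in A'}$ of real numbers with $x_a=0$ for all but countably many $a$ and $\sum_a|x_a|^p<\infty$, with norm $\|x\|_p=(\sum_a|x_a|^p)^{1/p}$. $N(A)$ is the set of all sequences $\alpha=a_1a_2a_3\ldots$ with $a_k\in A$, with metric $d(v,v')=1/k$ where $k$ is the first index at which $v,v'$ differ, and $d(v,v)=0$. The map $p_p:N(A)\to l^p(A)$ is $p_p(\alpha)=(\alpha_b)_{b\in A'}$ where, for $\alpha=a_1a_2\ldots$, $\alpha_b=\sum_{k:\,a_k=b}2^{-k}$ (and $\alpha_b=0$ if no $a_k$ equals $b$). *)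

theory Defs
  imports "HOL-Analysis.Analysis"
begin

text \<open>Elements of N(A) are sequences a_1 a_2 ... with values in A. We index them
  from 0: a sequence v :: nat => 'a represents v 0 v 1 v 2 ..., i.e. paper index k
  corresponds to Isabelle index k-1.\<close>

definition NA :: "'a set \<Rightarrow> (nat \<Rightarrow> 'a) set" where
  "NA A = {v. \<forall>k. v k \<in> A}"

definition dN :: "(nat \<Rightarrow> 'a) \<Rightarrow> (nat \<Rightarrow> 'a) \<Rightarrow> real" where
  "dN v v' = (if v = v' then 0 else 1 / real (Suc (LEAST k. v k \<noteq> v' k)))"

definition coordN :: "(nat \<Rightarrow> 'a) \<Rightarrow> 'a \<Rightarrow> real" where
  "coordN v b = (\<Sum>k. if v k = b then (1/2) ^ Suc k else 0)"

definition pmap :: "'a set \<Rightarrow> 'a \<Rightarrow> (nat \<Rightarrow> 'a) \<Rightarrow> ('a \<Rightarrow> real)" where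
  "pmap A z v = (\<lambda>b. if b \<in> A - {z} then coordN v b else 0)"

definition lp_norm :: "real \<Rightarrow> 'a set \<Rightarrow> ('a \<Rightarrow> real) \<Rightarrow> real" where
  "lp_norm p I x = (infsum (\<lambda>b. \<bar>x b\<bar> powr p) I) powr (1 / p)"

end

theory Submission
  imports Defs
begin

abbreviation g :: "nat \<Rightarrow> real" where "g i \<equiv> (1/2) ^ Suc i"

lemma g_summable: "summable g" using power_half_series summable_def by blast
lemma g_suminf: "suminf g = 1" using power_half_series sums_unique by metis

lemma ind_summable: "summable (\<lambda>i. if P i then g i else 0)"
  by (rule summable_comparison_test[OF _ g_summable]) auto

lemma coord_rep:
  assumes "finite F"
  shows "(\<Sum>b\<in>F. coordN v b) = (\<Sum>i. if v i \<in> F then g i else 0)"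
proof -
  have "(\<Sum>b\<in>F. coordN v b) = (\<Sum>i. \<Sum>b\<in>F. if v i = b then g i else 0)"
    unfolding coordN_def by (rule suminf_sum[symmetric]) (rule ind_summable)
  also have "\<dots> = (\<Sum>i. if v i \<in> F then g i else 0)"
    using assms by (intro suminf_cong) (simp add: sum.delta)
  finally show ?thesis .
qed

lemma coord_upper:
  assumes "finite F" "finite I" "\<And>i. i \<in> I \<Longrightarrow> v i \<notin> F"
  shows "(\<Sum>b\<in>F. coordN v b) \<le> 1 - sum g I"
proof -
  have s: "(\<lambda>i. g i - (if i \<in> I then g i else 0)) sums (1 - sum g I)"
    by (intro sums_diff power_half_series sums_If_finite_set assms)
  have "(\<Sum>i. if v i \<in> F then g i else 0) \<le> (\<Sum>i. g i - (if i \<in> I then g i else 0))"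
    by (intro suminf_le ind_summable) (use s assms(3) in \<open>auto simp: sums_iff\<close>)
  then show ?thesis unfolding coord_rep[OF assms(1)] sums_unique[OF s, symmetric] .
qed

lemma coord_lower:
  assumes "finite F" "finite I" "\<And>i. i \<in> I \<Longrightarrow> v i \<in> F"
  shows "(\<Sum>b\<in>F. coordN v b) \<ge> sum g I"
proof -
  have "sum g I = (\<Sum>i\<in>I. if v i \<in> F then g i else 0)" using assms(3) by simp
  also have "\<dots> \<le> (\<Sum>i. if v i \<in> F then g i else 0)"
    by (intro sum_le_suminf ind_summable assms) auto
  finally show ?thesis using coord_rep[OF assms(1)] by simp
qed

lemma coord_nonneg: "coordN v b \<ge> 0"
  unfolding coordN_def by (intro suminf_nonneg ind_summable) auto

lemma coord_le1: "coordN v b \<le> 1"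
  using coord_upper[of "{b}" "{}" v] by simp

lemma coord_summable_on: "(\<lambda>b. coordN v b) summable_on B"
proof (rule nonneg_bdd_above_summable_on)
  show "bdd_above (sum (coordN v) ` {F. F \<subseteq> B \<and> finite F})"
    using coord_upper[of _ "{}" v] by (intro bdd_aboveI[of _ 1]) auto
qed (rule coord_nonneg)

definition shift :: "nat \<Rightarrow> (nat \<Rightarrow> 'a) \<Rightarrow> nat \<Rightarrow> 'a" where
  "shift m v = (\<lambda>i. v (i + m))"

lemma coord_shift:
  "coordN v b = (\<Sum>i<m. if v i = b then g i else 0) + (1/2)^m * coordN (shift m v) b"
proof -
  have "coordN v b = (\<Sum>n. (if v (n+m) = b then g (n+m) else 0)) + (\<Sum>i<m. if v i = b then g i else 0)"
    unfolding coordN_def by (rule suminf_split_initial_segment[OF ind_summable])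
  also have "(\<Sum>n. (if v (n+m) = b then g (n+m) else 0)) = (\<Sum>n. (1/2)^m * (if v (n+m) = b then g n else 0))"
    by (intro suminf_cong) (simp add: power_add)
  also have "\<dots> = (1/2)^m * coordN (shift m v) b"
    unfolding coordN_def shift_def by (rule suminf_mult[OF ind_summable])
  finally show ?thesis by simp
qed


lemma first_letter:
  fixes \<beta>s :: "nat \<Rightarrow> nat \<Rightarrow> 'a"
  assumes A: "\<And>n k. \<beta>s n k \<in> A" "\<And>k. \<beta> k \<in> A"
    and nc: "\<forall>q. \<not> (\<forall>k\<ge>q. \<beta> k = \<beta> q)"
    and close: "\<And>\<epsilon>. \<epsilon> > 0 \<Longrightarrow> eventually (\<lambda>n. \<forall>b\<in>A-{z}. \<bar>coordN (\<beta>s n) b - coordN \<beta> b\<bar> < \<epsilon>) sequentially"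
  shows "eventually (\<lambda>n. \<beta>s n 0 = \<beta> 0) sequentially"
proof -
  obtain k where k: "k \<ge> 1" "\<beta> k \<noteq> \<beta> 1" using nc by (metis)
  obtain k' where k': "k' \<ge> 1" "\<beta> k' \<noteq> z" using k by (metis order_refl)
  have gk: "g k > 0" "g k' > 0" by simp_all
  have ev1: "eventually (\<lambda>n. \<forall>b\<in>A-{z}. \<bar>coordN (\<beta>s n) b - coordN \<beta> b\<bar> < g k) sequentially"
    using close gk by blast
  have ev2: "eventually (\<lambda>n. \<forall>b\<in>A-{z}. \<bar>coordN (\<beta>s n) b - coordN \<beta> b\<bar> < g k' / 2) sequentially"
    using close[of "g k' / 2"] gk by simp
  show ?thesis using ev1 ev2
  proof eventually_elim
    case (elim n)
    show ?case
    proof (rule ccontr)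
      assume ne: "\<beta>s n 0 \<noteq> \<beta> 0"
      show False
      proof (cases "\<beta>s n 0 = z")
        case False
        define c where "c = \<beta>s n 0"
        have cA: "c \<in> A - {z}" using A False c_def by auto
        have lo: "coordN (\<beta>s n) c \<ge> 1/2"
          using coord_lower[of "{c}" "{0}" "\<beta>s n"] c_def by simp
        have "coordN \<beta> c \<le> 1/2 - g k"
        proof (cases "\<beta> 1 = c")
          case True
          have "0 \<notin> {k}" using k by auto
          have prem: "\<And>i. i \<in> {0,k} \<Longrightarrow> \<beta> i \<notin> {c}" using True k ne c_def by auto
          have "coordN \<beta> c \<le> 1 - sum g {0, k}"
            using coord_upper[of "{c}" "{0,k}" \<beta>, OF _ _ prem] by simp
          then show ?thesis using k \<open>0 \<notin> {k}\<close> by simp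
        next
          case False
          have prem: "\<And>i. i \<in> {0,1} \<Longrightarrow> \<beta> i \<notin> {c}" using False ne c_def by auto
          have "coordN \<beta> c \<le> 1 - sum g {0, 1}"
            using coord_upper[of "{c}" "{0,1}" \<beta>, OF _ _ prem] by simp
          moreover have "g k \<le> g 1"
            using k by (intro power_decreasing) auto
          ultimately show ?thesis by simp
        qed
        moreover have "\<bar>coordN (\<beta>s n) c - coordN \<beta> c\<bar> < g k" using elim(1) cA by blast
        ultimately show False using lo by linarith
      next
        case True
        define F where "F = {\<beta> 0, \<beta> k'}"
        have b0: "\<beta> 0 \<noteq> z" using True ne by simp
        have FA: "F \<subseteq> A - {z}" using A b0 k' F_def by auto
        have up: "(\<Sum>b\<in>F. coordN (\<beta>s n) b) \<le> 1 - sum g {0}"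
          using coord_upper[of F "{0}" "\<beta>s n"] True b0 k' F_def by auto
        have "0 \<notin> {k'}" using k' by auto
        have lw: "(\<Sum>b\<in>F. coordN \<beta> b) \<ge> sum g {0, k'}"
          using coord_lower[of F "{0,k'}" \<beta>] F_def by auto
        have "\<bar>(\<Sum>b\<in>F. coordN (\<beta>s n) b) - (\<Sum>b\<in>F. coordN \<beta> b)\<bar>
              \<le> (\<Sum>b\<in>F. \<bar>coordN (\<beta>s n) b - coordN \<beta> b\<bar>)"
          by (metis sum_abs sum_subtractf)
        also have "\<dots> < (\<Sum>b\<in>F. g k' / 2)"
          using elim(2) FA by (intro sum_strict_mono) (auto simp: F_def)
        also have "\<dots> \<le> 2 * (g k' / 2)"
          using gk unfolding F_def by (cases "\<beta> 0 = \<beta> k'") auto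
        finally have "\<bar>(\<Sum>b\<in>F. coordN (\<beta>s n) b) - (\<Sum>b\<in>F. coordN \<beta> b)\<bar> < g k'" by simp
        moreover have "sum g {0, k'} = 1/2 + g k'" using \<open>0 \<notin> {k'}\<close> by simp
        moreover have "sum g {0} = 1/2" by simp
        ultimately show False using up lw by linarith
      qed
    qed
  qed
qed


lemma lp_bound:
  assumes p: "p \<ge> 1" and b: "b \<in> A - {z}"
  shows "\<bar>coordN u b - coordN v b\<bar> \<le> lp_norm p (A - {z}) (\<lambda>b. pmap A z u b - pmap A z v b)"
proof -
  define d where "d b = \<bar>coordN u b - coordN v b\<bar>" for b
  have d01: "0 \<le> d b" "d b \<le> 1" for b
    unfolding d_def using coord_nonneg[of u b] coord_nonneg[of v b] coord_le1[of u b] coord_le1[of v b] by auto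
  have dp: "d b powr p \<le> coordN u b + coordN v b" for b
  proof -
    have "d b powr p \<le> d b powr 1"
      using d01[of b] p by (cases "d b = 0") (auto intro: powr_le_one_le)
    also have "\<dots> \<le> coordN u b + coordN v b"
      using d01[of b] coord_nonneg[of u b] coord_nonneg[of v b] unfolding d_def by (cases "d b = 0") auto
    finally show ?thesis .
  qed
  define f where "f b = \<bar>pmap A z u b - pmap A z v b\<bar> powr p" for b
  have eq': "f b = d b powr p" if "b \<in> A - {z}" for b
    using that by (simp add: pmap_def d_def f_def)
  have sa: "(\<lambda>b. coordN u b + coordN v b) summable_on (A - {z})"
    by (rule summable_on_add[OF coord_summable_on coord_summable_on])
  have sm: "(\<lambda>b. d b powr p) summable_on (A - {z})"
    by (rule summable_on_comparison_test[OF sa]) (simp_all add: dp)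
  have sm': "f summable_on (A - {z})"
    using summable_on_cong[of "A - {z}" f "\<lambda>b. d b powr p", OF eq'] sm by simp
  have "d b powr p = infsum f {b}"
    using eq'[OF b] by simp
  also have "\<dots> \<le> infsum f (A - {z})"
    by (rule infsum_mono_neutral[OF summable_on_finite sm']) (use b in \<open>simp_all add: f_def\<close>)
  finally have "(d b powr p) powr (1/p) \<le> infsum f (A - {z}) powr (1/p)"
    using p by (intro powr_mono2) auto
  moreover have "(d b powr p) powr (1/p) = d b"
    using p d01[of b] by (cases "d b = 0") (auto simp: powr_powr)
  ultimately show ?thesis unfolding lp_norm_def d_def f_def by simp
qed


theorem proposition3p3:
  fixes A :: "'a set" and z :: 'a and p :: real
    and \<alpha>s :: "nat \<Rightarrow> (nat \<Rightarrow> 'a)" and \<alpha> :: "nat \<Rightarrow> 'a"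
  assumes "infinite A" and "z \<in> A" and "p \<ge> 1"
    and "\<And>n. \<alpha>s n \<in> NA A" and "\<alpha> \<in> NA A"
    and "\<forall>q. \<not> (\<forall>k\<ge>q. \<alpha> k = \<alpha> q)"
    and "(\<lambda>n. lp_norm p (A - {z}) (\<lambda>b. pmap A z (\<alpha>s n) b - pmap A z \<alpha> b)) \<longlonglongrightarrow> 0"
  shows "(\<lambda>n. dN (\<alpha>s n) \<alpha>) \<longlonglongrightarrow> 0"
proof -
  have Aa: "\<And>n k. \<alpha>s n k \<in> A" "\<And>k. \<alpha> k \<in> A" using assms(4,5) unfolding NA_def by auto
  have close0: "eventually (\<lambda>n. \<forall>b\<in>A-{z}. \<bar>coordN (\<alpha>s n) b - coordN \<alpha> b\<bar> < \<epsilon>) sequentially"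
    if "\<epsilon> > 0" for \<epsilon>
  proof -
    have "eventually (\<lambda>n. \<bar>lp_norm p (A - {z}) (\<lambda>b. pmap A z (\<alpha>s n) b - pmap A z \<alpha> b) - 0\<bar> < \<epsilon>) sequentially"
      using assms(7) that tendsto_iff[THEN iffD1] by (fastforce simp: dist_real_def)
    then show ?thesis
    proof eventually_elim
      case (elim n)
      show ?case
      proof
        fix b assume "b \<in> A - {z}"
        from lp_bound[OF assms(3) this, of "\<alpha>s n" \<alpha>] elim show "\<bar>coordN (\<alpha>s n) b - coordN \<alpha> b\<bar> < \<epsilon>" by simp
      qed
    qed
  qed
  have prefix: "eventually (\<lambda>n. \<forall>i<m. \<alpha>s n i = \<alpha> i) sequentially" for m
  proof (induction m)
    case 0 then show ?case by simp
  next
    case (Suc m)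
    have fl: "eventually (\<lambda>n. shift m (\<alpha>s n) 0 = shift m \<alpha> 0) sequentially"
    proof (rule first_letter[where A=A and z=z])
      show "shift m (\<alpha>s n) k \<in> A" "shift m \<alpha> k \<in> A" for n k using Aa by (auto simp: shift_def)
      show "\<forall>q. \<not> (\<forall>k\<ge>q. shift m \<alpha> k = shift m \<alpha> q)"
      proof (intro allI notI)
        fix q assume h: "\<forall>k\<ge>q. shift m \<alpha> k = shift m \<alpha> q"
        have "\<forall>k\<ge>q+m. \<alpha> k = \<alpha> (q+m)"
        proof (intro allI impI)
          fix k assume "k \<ge> q + m"
          then show "\<alpha> k = \<alpha> (q+m)" using h[rule_format, of "k - m"] by (simp add: shift_def)
        qed
        then show False using assms(6) by blast
      qed
      fix \<epsilon> :: real assume e: "\<epsilon> > 0"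
      have "eventually (\<lambda>n. (\<forall>i<m. \<alpha>s n i = \<alpha> i) \<and> (\<forall>b\<in>A-{z}. \<bar>coordN (\<alpha>s n) b - coordN \<alpha> b\<bar> < \<epsilon> * (1/2)^m)) sequentially"
        using Suc close0[of "\<epsilon> * (1/2)^m"] e by (intro eventually_conj) auto
      then show "eventually (\<lambda>n. \<forall>b\<in>A-{z}. \<bar>coordN (shift m (\<alpha>s n)) b - coordN (shift m \<alpha>) b\<bar> < \<epsilon>) sequentially"
      proof eventually_elim
        case (elim n)
        show ?case
        proof
          fix b assume b: "b \<in> A - {z}"
          have P: "(\<Sum>i<m. if \<alpha>s n i = b then g i else 0) = (\<Sum>i<m. if \<alpha> i = b then g i else 0)"
            using elim by (intro sum.cong) auto
          have "coordN (\<alpha>s n) b - coordN \<alpha> b = (1/2)^m * (coordN (shift m (\<alpha>s n)) b - coordN (shift m \<alpha>) b)"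
            using coord_shift[of "\<alpha>s n" b m] coord_shift[of \<alpha> b m] P by (simp add: algebra_simps)
          moreover have "\<bar>coordN (\<alpha>s n) b - coordN \<alpha> b\<bar> < \<epsilon> * (1/2)^m"
            using elim b by blast
          ultimately have "(1/2)^m * \<bar>coordN (shift m (\<alpha>s n)) b - coordN (shift m \<alpha>) b\<bar> < (1/2)^m * \<epsilon>"
            by (simp only: abs_mult mult.commute[of \<epsilon>]) simp
          then show "\<bar>coordN (shift m (\<alpha>s n)) b - coordN (shift m \<alpha>) b\<bar> < \<epsilon>"
            by (rule mult_less_cancel_left_pos[THEN iffD1, rotated]) simp
        qed
      qed
    qed
    show ?case using fl Suc
    proof eventually_elim
      case (elim n)
      then show ?case by (auto simp: shift_def less_Suc_eq)
    qed
  qed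
  show ?thesis
  proof (rule LIMSEQ_I)
    fix r :: real assume r: "r > 0"
    obtain m where m: "inverse (real (Suc m)) < r" using reals_Archimedean r by blast
    from prefix[of m] obtain N where N: "\<And>n. n \<ge> N \<Longrightarrow> \<forall>i<m. \<alpha>s n i = \<alpha> i"
      unfolding eventually_sequentially by blast
    show "\<exists>no. \<forall>n\<ge>no. norm (dN (\<alpha>s n) \<alpha> - 0) < r"
    proof (intro exI allI impI)
      fix n assume "n \<ge> N"
      note Nn = N[OF this]
      show "norm (dN (\<alpha>s n) \<alpha> - 0) < r"
      proof (cases "\<alpha>s n = \<alpha>")
        case True then show ?thesis using r by (simp add: dN_def)
      next
        case False
        then obtain k where k: "\<alpha>s n k \<noteq> \<alpha> k" by auto
        define L where "L = (LEAST k. \<alpha>s n k \<noteq> \<alpha> k)"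
        have "\<alpha>s n L \<noteq> \<alpha> L" unfolding L_def using k by (rule LeastI)
        then have "L \<ge> m" using Nn by (meson not_le)
        then have "1 / real (Suc L) \<le> inverse (real (Suc m))"
          by (simp add: divide_simps)
        then show ?thesis using m False by (simp add: dN_def L_def)
      qed
    qed
  qed
qed

end
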